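(* Let $0<p<\infty$, $m\in\mathbb{N}$, and let $E_1,\dots,E_m,F$ be Banach spaces over $\mathbb{K}=\mathbb{R}$ or $\mathbb{C}$. Then $$\eta^{m\text{-}mult}_{(p,p)}(E_1,\dots,E_m;F)\le \frac mp \ \text{ if } 0<p\le 2,\qquad \eta^{m\text{-}mult}_{(p,p)}(E_1,\dots,E_m;F)\le \frac m2 \ \text{ if } p\ge 2.$$
   Context: For vectors $x_1,\dots,x_n$ in a Banach space $E$ and $q>0$, $\|(x_k)_{k=1}^n\|_{w,q}:=\sup_{\varphi\in B_{E^*}}\left(\sum_{k=1}^n|\varphi(x_k)|^q\right)^{1/q}$, where $B_{E^*}$ is the closed unit ball of the dual. $\mathcal{L}(E_1,\dots,E_m;F)$ is the space of bounded $m$-linear maps. For $p,q>0$, the multilinear $m$-index of $(p,q)$-summability $\eta^{m\text{-}mult}_{(p,q)}(E_1,\dots,E_m;F)$ is the infimum of all real numbers $s$ with the property: for every $T\in\mathcal{L}(E_1,\dots,E_m;F)$ there is a constant $C\ge0$ (depending only on $m$ and $T$) such that $$\left(\sum_{k_1,\dots,k_m=1}^n\|T(x^{(1)}_{k_1},\dots,x^{(m)}_{k_m})\|^p\right)^{1/p}\le C n^{s}\prod_{i=1}^m\|(x^{(i)}_{k})_{k=1}^n\|_{w,q}$$ for all positive integers $n$ and all $x^{(i)}_k\in E_i$, $1\le k\le n$, $1\le i\le m$. *)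

theory Defs
  imports "HOL-Analysis.Analysis"
begin

text \<open>A scalar multiplication by the field K (K = real or complex) on a real Banach
  space, compatible with the real structure and the norm: this makes the space a
  Banach space over K.\<close>
definition K_scaling :: "('k::real_normed_field \<Rightarrow> 'v::real_normed_vector \<Rightarrow> 'v) \<Rightarrow> bool" where
  "K_scaling sc \<longleftrightarrow>
     (\<forall>a b x. sc (a + b) x = sc a x + sc b x) \<and>
     (\<forall>a x y. sc a (x + y) = sc a x + sc a y) \<and>
     (\<forall>a b x. sc (a * b) x = sc a (sc b x)) \<and>
     (\<forall>r x. sc (of_real r) x = r *\<^sub>R x) \<and>
     (\<forall>a x. norm (sc a x) = norm a * norm x)"

text \<open>A closed K-linear subspace (hence itself a Banach space over K).\<close>
definition K_subspace :: "('k::real_normed_field \<Rightarrow> 'v::real_normed_vector \<Rightarrow> 'v) \<Rightarrow> 'v set \<Rightarrow> bool" where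
  "K_subspace sc S \<longleftrightarrow> 0 \<in> S \<and> (\<forall>x\<in>S. \<forall>y\<in>S. x + y \<in> S) \<and>
     (\<forall>a. \<forall>x\<in>S. sc a x \<in> S) \<and> closed S"

definition dual_ball :: "('k::real_normed_field \<Rightarrow> 'v::real_normed_vector \<Rightarrow> 'v) \<Rightarrow> 'v set \<Rightarrow> ('v \<Rightarrow> 'k) set" where
  "dual_ball sc S = {\<phi>. (\<forall>x\<in>S. \<forall>y\<in>S. \<phi> (x + y) = \<phi> x + \<phi> y) \<and>
     (\<forall>a. \<forall>x\<in>S. \<phi> (sc a x) = a * \<phi> x) \<and> (\<forall>x\<in>S. norm (\<phi> x) \<le> norm x)}"

definition weak_norm :: "('k::real_normed_field \<Rightarrow> 'v::real_normed_vector \<Rightarrow> 'v) \<Rightarrow> 'v set \<Rightarrow> real \<Rightarrow> nat \<Rightarrow> (nat \<Rightarrow> 'v) \<Rightarrow> real" where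
  "weak_norm sc S q n x = (SUP \<phi>\<in>dual_ball sc S. (\<Sum>k\<in>{1..n}. norm (\<phi> (x k)) powr q) powr (1 / q))"

text \<open>Arguments of an m-linear map: only the first m coordinates matter.\<close>
definition args :: "nat \<Rightarrow> (nat \<Rightarrow> 'v::zero) \<Rightarrow> nat \<Rightarrow> 'v" where
  "args m x = (\<lambda>i. if i < m then x i else 0)"

definition mult_bounded ::
  "('k::real_normed_field \<Rightarrow> 'e::real_normed_vector \<Rightarrow> 'e) \<Rightarrow> ('k \<Rightarrow> 'f::real_normed_vector \<Rightarrow> 'f)
   \<Rightarrow> nat \<Rightarrow> (nat \<Rightarrow> 'e set) \<Rightarrow> ((nat \<Rightarrow> 'e) \<Rightarrow> 'f) \<Rightarrow> bool" where
  "mult_bounded scE scF m S T \<longleftrightarrow>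
     (\<forall>i<m. \<forall>x. (\<forall>j<m. x j \<in> S j) \<longrightarrow>
        (\<forall>y\<in>S i. \<forall>z\<in>S i. T (args m (x(i := y + z))) = T (args m (x(i := y))) + T (args m (x(i := z)))) \<and>
        (\<forall>a. \<forall>y\<in>S i. T (args m (x(i := scE a y))) = scF a (T (args m (x(i := y))))))
     \<and> (\<exists>C. \<forall>x. (\<forall>j<m. x j \<in> S j) \<longrightarrow> norm (T (args m x)) \<le> C * (\<Prod>j<m. norm (x j)))"

definition mult_index ::
  "('k::real_normed_field \<Rightarrow> 'e::real_normed_vector \<Rightarrow> 'e) \<Rightarrow> ('k \<Rightarrow> 'f::real_normed_vector \<Rightarrow> 'f)
   \<Rightarrow> nat \<Rightarrow> (nat \<Rightarrow> 'e set) \<Rightarrow> real \<Rightarrow> real \<Rightarrow> ereal" where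
  "mult_index scE scF m S p q = Inf (ereal ` {s. \<forall>T. mult_bounded scE scF m S T \<longrightarrow>
     (\<exists>C\<ge>0. \<forall>n\<ge>1. \<forall>x::nat \<Rightarrow> nat \<Rightarrow> 'e. (\<forall>i<m. \<forall>k\<in>{1..n}. x i k \<in> S i) \<longrightarrow>
        (\<Sum>k\<in>PiE {..<m} (\<lambda>_. {1..n}). norm (T (args m (\<lambda>i. x i (k i)))) powr p) powr (1 / p)
          \<le> C * real n powr s * (\<Prod>i<m. weak_norm scE (S i) q n (x i)))})"

end

theory Submission
  imports Defs
begin
lemma hb_real:
  fixes S :: "'v::real_normed_vector set"
  assumes add: "\<forall>a\<in>S. \<forall>b\<in>S. a+b\<in>S" and scal: "\<forall>r. \<forall>a\<in>S. r *\<^sub>R a \<in> S" and x: "x\<in>S"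
  shows "\<exists>u. (\<forall>a\<in>S. \<forall>b\<in>S. u(a+b) = u a + u b) \<and> (\<forall>r. \<forall>a\<in>S. u (r *\<^sub>R a) = r * u a)
            \<and> (\<forall>a\<in>S. \<bar>u a\<bar> \<le> norm a) \<and> u x = norm x"
proof -
  define lin where "lin G \<longleftrightarrow> G \<subseteq> S \<times> UNIV \<and> (\<forall>a b c d. (a,b)\<in>G \<longrightarrow> (c,d)\<in>G \<longrightarrow> (a+c,b+d)\<in>G)
     \<and> (\<forall>r a b. (a,b)\<in>G \<longrightarrow> (r*\<^sub>R a, r*b) \<in> G) \<and> (\<forall>a b. (a,b)\<in>G \<longrightarrow> b \<le> norm a)" for G :: "('v \<times> real) set"
  define A where "A = {G. lin G \<and> (x, norm x) \<in> G}"
  define G0 where "G0 = {(t *\<^sub>R x, t * norm x) | t. True}"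
  have G0A: "G0 \<in> A"
  proof -
    have "G0 \<subseteq> S \<times> UNIV" using scal x by (auto simp: G0_def)
    moreover have "(a+c,b+d)\<in>G0" if hh: "(a,b)\<in>G0" "(c,d)\<in>G0" for a b c d
    proof -
      obtain t t' where "a = t *\<^sub>R x" "b = t * norm x" "c = t' *\<^sub>R x" "d = t' * norm x"
        using hh unfolding G0_def by blast
      then have "(a+c,b+d) = ((t+t') *\<^sub>R x, (t+t') * norm x)" by (simp add: algebra_simps)
      then show ?thesis unfolding G0_def by blast
    qed
    moreover have "(r*\<^sub>R a, r*b)\<in>G0" if hyp: "(a,b)\<in>G0" for r a b
    proof -
      obtain t where "a = t *\<^sub>R x" "b = t * norm x" using hyp unfolding G0_def by blast
      then have "(r*\<^sub>R a, r*b) = ((r*t) *\<^sub>R x, (r*t) * norm x)" by simp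
      then show ?thesis unfolding G0_def by blast
    qed
    moreover have "b \<le> norm a" if "(a,b)\<in>G0" for a b
      using that unfolding G0_def by (auto intro!: mult_right_mono simp: abs_ge_self)
    moreover have "(x, norm x) \<in> G0" unfolding G0_def by (auto intro!: exI[of _ 1])
    ultimately show ?thesis unfolding A_def lin_def by blast
  qed
  have "\<forall>C\<in>chains A. \<exists>U\<in>A. \<forall>X\<in>C. X \<subseteq> U"
  proof
    fix C assume C: "C \<in> chains A"
    show "\<exists>U\<in>A. \<forall>X\<in>C. X \<subseteq> U"
    proof (cases "C = {}")
      case True then show ?thesis using G0A by blast
    next
      case False
      have CA: "C \<subseteq> A" and ch: "\<And>X Y. X\<in>C \<Longrightarrow> Y\<in>C \<Longrightarrow> X \<subseteq> Y \<or> Y \<subseteq> X"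
        using C by (auto simp: chains_def chain_subset_def)
      have "\<Union>C \<in> A"
      proof -
        have l: "lin X" if "X \<in> C" for X using CA that by (auto simp: A_def)
        have "\<Union>C \<subseteq> S \<times> UNIV" using l unfolding lin_def by blast
        moreover have "(a+c,b+d)\<in>\<Union>C" if hyp: "(a,b)\<in>\<Union>C" "(c,d)\<in>\<Union>C" for a b c d
        proof -
          obtain X Y where XY: "X\<in>C" "Y\<in>C" "(a,b)\<in>X" "(c,d)\<in>Y" using hyp by auto
          show ?thesis
          proof (cases "X \<subseteq> Y")
            case True then show ?thesis using XY l[of Y] unfolding lin_def by blast
          next
            case False then have "Y \<subseteq> X" using ch XY by blast
            then show ?thesis using XY l[of X] unfolding lin_def by blast
          qed
        qed
        moreover have "(r*\<^sub>R a, r*b)\<in>\<Union>C" if "(a,b)\<in>\<Union>C" for r a b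
          using that l unfolding lin_def by blast
        moreover have "b \<le> norm a" if "(a,b)\<in>\<Union>C" for a b
          using that l unfolding lin_def by blast
        moreover have "(x, norm x) \<in> \<Union>C" using False CA by (auto simp: A_def)
        ultimately show ?thesis unfolding A_def lin_def by blast
      qed
      then show ?thesis by blast
    qed
  qed
  from Zorn_Lemma2[OF this] obtain M where MA: "M\<in>A" and max: "\<forall>X\<in>A. M \<subseteq> X \<longrightarrow> X = M" by blast
  have linM: "lin M" and xM: "(x, norm x) \<in> M" using MA by (auto simp: A_def)
  have Msub: "M \<subseteq> S \<times> UNIV" and Madd: "\<And>a b c d. (a,b)\<in>M \<Longrightarrow> (c,d)\<in>M \<Longrightarrow> (a+c,b+d)\<in>M"
    and Msc: "\<And>r a b. (a,b)\<in>M \<Longrightarrow> (r*\<^sub>R a, r*b) \<in> M" and Mdom: "\<And>a b. (a,b)\<in>M \<Longrightarrow> b \<le> norm a"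
    using linM unfolding lin_def by blast+
  have M00: "(0,0) \<in> M" using Msc[OF xM, of 0] by simp
  have uniq: "b = b'" if "(y,b)\<in>M" "(y,b')\<in>M" for y b b'
  proof -
    have "(y + (-1) *\<^sub>R y, b + (-1)*b') \<in> M" by (rule Madd[OF that(1) Msc[OF that(2)]])
    then have 1: "b - b' \<le> 0" using Mdom by fastforce
    have "(y + (-1) *\<^sub>R y, b' + (-1)*b) \<in> M" by (rule Madd[OF that(2) Msc[OF that(1)]])
    then have 2: "b' - b \<le> 0" using Mdom by fastforce
    from 1 2 show ?thesis by simp
  qed
  have dom: "\<exists>b. (z,b)\<in>M" if z: "z \<in> S" for z
  proof (rule ccontr)
    assume nz: "\<not> (\<exists>b. (z,b)\<in>M)"
    define L where "L = {b - norm (a - z) | a b. (a,b)\<in>M}"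
    define c where "c = Sup L"
    have Lne: "L \<noteq> {}" using M00 by (auto simp: L_def)
    have ineq: "b - norm (a - z) \<le> norm (a' + z) - b'" if "(a,b)\<in>M" "(a',b')\<in>M" for a b a' b'
    proof -
      have "b + b' \<le> norm (a + a')" using Mdom[OF Madd[OF that]] .
      also have "\<dots> = norm ((a - z) + (a' + z))" by (simp add: algebra_simps)
      also have "\<dots> \<le> norm (a - z) + norm (a' + z)" by (rule norm_triangle_ineq)
      finally show ?thesis by simp
    qed
    have bdd: "bdd_above L" unfolding L_def bdd_above_def using ineq[OF _ M00] by auto
    have lo: "b - norm (a - z) \<le> c" if "(a,b)\<in>M" for a b
      unfolding c_def by (rule cSup_upper[OF _ bdd]) (use that in \<open>auto simp: L_def\<close>)
    have hi: "c \<le> norm (a + z) - b" if "(a,b)\<in>M" for a b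
      unfolding c_def by (rule cSup_least[OF Lne]) (use ineq[OF _ that] in \<open>auto simp: L_def\<close>)
    define M' where "M' = {(a + t *\<^sub>R z, b + t * c) | a b t. (a,b)\<in>M}"
    have "lin M'"
    proof -
      have "M' \<subseteq> S \<times> UNIV" using Msub add scal z by (auto simp: M'_def)
      moreover have "(a+c',b+d)\<in>M'" if hyp: "(a,b)\<in>M'" "(c',d)\<in>M'" for a b c' d
      proof -
        obtain a1 b1 t1 a2 b2 t2 where h: "(a1,b1)\<in>M" "(a2,b2)\<in>M" "a = a1 + t1 *\<^sub>R z" "b = b1 + t1 * c"
          "c' = a2 + t2 *\<^sub>R z" "d = b2 + t2 * c" using hyp unfolding M'_def by blast
        have "(a+c',b+d) = ((a1+a2) + (t1+t2) *\<^sub>R z, (b1+b2) + (t1+t2)*c)"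
          using h by (simp add: algebra_simps)
        then show ?thesis unfolding M'_def using Madd[OF h(1,2)] by blast
      qed
      moreover have "(r*\<^sub>R a, r*b)\<in>M'" if hyp: "(a,b)\<in>M'" for r a b
      proof -
        obtain a1 b1 t1 where h: "(a1,b1)\<in>M" "a = a1 + t1 *\<^sub>R z" "b = b1 + t1 * c"
          using hyp unfolding M'_def by blast
        have "(r*\<^sub>R a, r*b) = (r *\<^sub>R a1 + (r*t1) *\<^sub>R z, r*b1 + (r*t1)*c)"
          using h by (simp add: algebra_simps)
        then show ?thesis unfolding M'_def using Msc[OF h(1)] by blast
      qed
      moreover have "b \<le> norm a" if hyp: "(a,b)\<in>M'" for a b
      proof -
        obtain a1 b1 t where h: "(a1,b1)\<in>M" "a = a1 + t *\<^sub>R z" "b = b1 + t * c"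
          using hyp unfolding M'_def by blast
        consider "t = 0" | "t > 0" | "t < 0" by linarith
        then show ?thesis
        proof cases
          case 1 then show ?thesis using h Mdom by simp
        next
          case 2
          have m: "((1/t) *\<^sub>R a1, (1/t) * b1) \<in> M" by (rule Msc[OF h(1)])
          have "c \<le> norm ((1/t) *\<^sub>R a1 + z) - (1/t) * b1" by (rule hi[OF m])
          then have "t * c \<le> t * (norm ((1/t) *\<^sub>R a1 + z) - (1/t) * b1)"
            using 2 by (simp add: mult_left_mono)
          also have "\<dots> = norm (t *\<^sub>R ((1/t) *\<^sub>R a1 + z)) - b1" using 2
            by (simp add: right_diff_distrib)
          also have "t *\<^sub>R ((1/t) *\<^sub>R a1 + z) = a1 + t *\<^sub>R z" using 2 by (simp add: algebra_simps)
          finally show ?thesis using h by simp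
        next
          case 3
          define s where "s = - t"
          have s: "s > 0" using 3 by (simp add: s_def)
          have m: "((1/s) *\<^sub>R a1, (1/s) * b1) \<in> M" by (rule Msc[OF h(1)])
          have "(1/s) * b1 - norm ((1/s) *\<^sub>R a1 - z) \<le> c" by (rule lo[OF m])
          then have "s * ((1/s) * b1 - norm ((1/s) *\<^sub>R a1 - z)) \<le> s * c"
            using s by (simp add: mult_left_mono)
          moreover have "s * ((1/s) * b1 - norm ((1/s) *\<^sub>R a1 - z)) = b1 - norm (s *\<^sub>R ((1/s) *\<^sub>R a1 - z))"
            using s by (simp add: right_diff_distrib)
          moreover have "s *\<^sub>R ((1/s) *\<^sub>R a1 - z) = a1 + t *\<^sub>R z" using s by (simp add: algebra_simps s_def)
          ultimately have "b1 - norm (a1 + t *\<^sub>R z) \<le> s * c" by metis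
          then show ?thesis using h unfolding s_def by simp
        qed
      qed
      ultimately show ?thesis unfolding lin_def by blast
    qed
    moreover have "M \<subseteq> M'" unfolding M'_def by force
    moreover have "(x, norm x) \<in> M'" using \<open>M \<subseteq> M'\<close> xM by blast
    ultimately have "M' = M" using max by (auto simp: A_def)
    moreover have "(z, c) \<in> M'" unfolding M'_def
    proof -
      have "(z, c) = (0 + 1 *\<^sub>R z, 0 + 1 * c)" by simp
      then show "(z, c) \<in> {(a + t *\<^sub>R z, b + t * c) |a b t. (a, b) \<in> M}" using M00 by blast
    qed
    ultimately show False using nz by blast
  qed
  define u where "u y = (SOME b. (y,b)\<in>M)" for y
  have uM: "(y, u y) \<in> M" if "y\<in>S" for y using dom[OF that] unfolding u_def by (rule someI_ex)
  have "u(a+b) = u a + u b" if "a\<in>S" "b\<in>S" for a b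
    using uniq[OF uM[of "a+b"] Madd[OF uM[OF that(1)] uM[OF that(2)]]] add that by simp
  moreover have "u (r *\<^sub>R a) = r * u a" if "a\<in>S" for r a
    using uniq[OF uM[of "r *\<^sub>R a"] Msc[OF uM[OF that]]] scal that by simp
  moreover have "\<bar>u a\<bar> \<le> norm a" if "a\<in>S" for a
  proof -
    have "u a \<le> norm a" using Mdom[OF uM[OF that]] .
    moreover have "(-1) * u a \<le> norm ((-1) *\<^sub>R a)" using Mdom[OF Msc[OF uM[OF that]]] .
    ultimately show ?thesis by simp
  qed
  moreover have "u x = norm x" using uniq[OF uM[OF x] xM] .
  ultimately show ?thesis by blast
qed

lemma norming_real:
  fixes S :: "'v::real_normed_vector set"
  assumes "K_subspace (scaleR :: real \<Rightarrow> 'v \<Rightarrow> 'v) S" "y \<in> S"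
  shows "\<exists>\<phi>\<in>dual_ball (scaleR :: real \<Rightarrow> 'v \<Rightarrow> 'v) S. norm (\<phi> y) = norm y"
proof -
  from assms have add: "\<forall>a\<in>S. \<forall>b\<in>S. a+b\<in>S" and scal: "\<forall>r. \<forall>a\<in>S. r *\<^sub>R a \<in> S"
    by (auto simp: K_subspace_def)
  from hb_real[OF add scal assms(2)] obtain u where
    u: "\<forall>a\<in>S. \<forall>b\<in>S. u(a+b) = u a + u b" "\<forall>r. \<forall>a\<in>S. u (r *\<^sub>R a) = r * u a"
       "\<forall>a\<in>S. \<bar>u a\<bar> \<le> norm a" "u y = norm y" by blast
  have "u \<in> dual_ball scaleR S" using u by (auto simp: dual_ball_def)
  moreover have "norm (u y) = norm y" using u by simp
  ultimately show ?thesis by blast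
qed

lemma K_sc_decomp:
  fixes sc :: "complex \<Rightarrow> 'v::real_normed_vector \<Rightarrow> 'v"
  assumes "K_scaling sc"
  shows "sc a y = Re a *\<^sub>R y + Im a *\<^sub>R sc \<i> y"
proof -
  have a: "a = of_real (Re a) + of_real (Im a) * \<i>" by (simp add: complex_eq_iff)
  have "sc a y = sc (of_real (Re a)) y + sc (of_real (Im a) * \<i>) y"
    using assms unfolding K_scaling_def by (subst a) metis
  also have "\<dots> = Re a *\<^sub>R y + sc (of_real (Im a)) (sc \<i> y)"
    using assms unfolding K_scaling_def by metis
  also have "\<dots> = Re a *\<^sub>R y + Im a *\<^sub>R sc \<i> y"
    using assms unfolding K_scaling_def by metis
  finally show ?thesis .
qed

lemma norming_complex:
  fixes S :: "'v::real_normed_vector set" and sc :: "complex \<Rightarrow> 'v \<Rightarrow> 'v"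
  assumes sc: "K_scaling sc" and sub: "K_subspace sc S" and y: "y \<in> S"
  shows "\<exists>\<phi>\<in>dual_ball sc S. norm (\<phi> y) = norm y"
proof -
  have add: "\<forall>a\<in>S. \<forall>b\<in>S. a+b\<in>S" and scS: "\<forall>a. \<forall>b\<in>S. sc a b \<in> S"
    using sub by (auto simp: K_subspace_def)
  have ofr: "sc (of_real r) x = r *\<^sub>R x" for r x using sc by (simp add: K_scaling_def)
  have scadd: "sc a (x + z) = sc a x + sc a z" for a x z using sc by (simp add: K_scaling_def)
  have scmul: "sc (a * b) x = sc a (sc b x)" for a b x using sc by (simp add: K_scaling_def)
  have scnorm: "norm (sc a x) = norm a * norm x" for a x using sc by (simp add: K_scaling_def)
  have scal: "\<forall>r. \<forall>a\<in>S. r *\<^sub>R a \<in> S" using scS ofr by metis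
  from hb_real[OF add scal y] obtain u where
    u: "\<forall>a\<in>S. \<forall>b\<in>S. u(a+b) = u a + u b" "\<forall>r. \<forall>a\<in>S. u (r *\<^sub>R a) = r * u a"
       "\<forall>a\<in>S. \<bar>u a\<bar> \<le> norm a" "u y = norm y" by blast
  define \<phi> where "\<phi> w = complex_of_real (u w) - \<i> * complex_of_real (u (sc \<i> w))" for w
  have Re\<phi>: "Re (\<phi> w) = u w" for w by (simp add: \<phi>_def)
  have \<phi>add: "\<phi> (a + b) = \<phi> a + \<phi> b" if "a\<in>S" "b\<in>S" for a b
    using that u(1) scS by (simp add: \<phi>_def scadd algebra_simps)
  have \<phi>sc: "\<phi> (sc a w) = a * \<phi> w" if w: "w \<in> S" for a w
  proof -
    have iw: "sc \<i> w \<in> S" using scS w by blast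
    have e1: "u (sc a w) = Re a * u w + Im a * u (sc \<i> w)"
      using K_sc_decomp[OF sc, of a w] u(1,2) w iw scal by simp
    have "sc \<i> (sc a w) = sc (\<i> * a) w" by (simp add: scmul)
    also have "\<dots> = (- Im a) *\<^sub>R w + Re a *\<^sub>R sc \<i> w"
      using K_sc_decomp[OF sc, of "\<i> * a" w] by simp
    finally have d: "sc \<i> (sc a w) = (- Im a) *\<^sub>R w + Re a *\<^sub>R sc \<i> w" .
    have m1: "(- Im a) *\<^sub>R w \<in> S" and m2: "Re a *\<^sub>R sc \<i> w \<in> S" using scal w iw by blast+
    have e2: "u (sc \<i> (sc a w)) = - Im a * u w + Re a * u (sc \<i> w)"
      unfolding d u(1)[rule_format, OF m1 m2] using u(2)[rule_format, OF w, of "- Im a"] u(2)[rule_format, OF iw, of "Re a"] by simp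
    show ?thesis unfolding \<phi>_def e1 e2
      by (simp add: complex_eq_iff algebra_simps)
  qed
  have \<phi>bd: "norm (\<phi> w) \<le> norm w" if w: "w \<in> S" for w
  proof (cases "\<phi> w = 0")
    case True then show ?thesis by simp
  next
    case False
    define \<beta> where "\<beta> = cnj (\<phi> w) / of_real (cmod (\<phi> w))"
    have nb: "norm \<beta> = 1" using False by (simp add: \<beta>_def norm_divide)
    have "\<phi> (sc \<beta> w) = \<beta> * \<phi> w" by (rule \<phi>sc[OF w])
    also have "\<dots> = of_real (cmod (\<phi> w))" using False
      by (simp add: \<beta>_def complex_norm_square[symmetric] power2_eq_square field_simps)
    finally have "cmod (\<phi> w) = u (sc \<beta> w)" using Re\<phi>[of "sc \<beta> w"] by simp
    also have "\<dots> \<le> norm (sc \<beta> w)" using u(3)[rule_format, of "sc \<beta> w"] scS w abs_le_D1 by blast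
    also have "\<dots> = norm w" using nb scnorm by simp
    finally show ?thesis .
  qed
  have "\<phi> \<in> dual_ball sc S" using \<phi>add \<phi>sc \<phi>bd by (auto simp: dual_ball_def)
  moreover have "norm (\<phi> y) = norm y"
  proof -
    have "norm y = \<bar>Re (\<phi> y)\<bar>" using Re\<phi> u(4) by simp
    also have "\<dots> \<le> norm (\<phi> y)" by (rule abs_Re_le_cmod)
    finally show ?thesis using \<phi>bd[OF y] by simp
  qed
  ultimately show ?thesis by blast
qed

lemma weak_norm_ge:
  fixes sc :: "'k::real_normed_field \<Rightarrow> 'v::real_normed_vector \<Rightarrow> 'v"
  assumes norming: "\<exists>\<phi>\<in>dual_ball sc S. norm (\<phi> (x k)) = norm (x k)"
    and k: "k \<in> {1..n}" and q: "q > 0" and xS: "\<forall>j\<in>{1..n}. x j \<in> S"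
  shows "norm (x k) \<le> weak_norm sc S q n x"
proof -
  obtain \<phi> where \<phi>: "\<phi> \<in> dual_ball sc S" "norm (\<phi> (x k)) = norm (x k)" using norming by blast
  define f where "f \<psi> = (\<Sum>j\<in>{1..n}. norm (\<psi> (x j)) powr q) powr (1 / q)" for \<psi> :: "'v \<Rightarrow> 'k"
  have bdd: "bdd_above (f ` dual_ball sc S)"
  proof (rule bdd_aboveI2)
    fix \<psi> assume \<psi>: "\<psi> \<in> dual_ball sc S"
    have "(\<Sum>j\<in>{1..n}. norm (\<psi> (x j)) powr q) \<le> (\<Sum>j\<in>{1..n}. norm (x j) powr q)"
    proof (rule sum_mono)
      fix j assume "j \<in> {1..n}"
      then have "norm (\<psi> (x j)) \<le> norm (x j)" using \<psi> xS by (auto simp: dual_ball_def)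
      then show "norm (\<psi> (x j)) powr q \<le> norm (x j) powr q" using q by (simp add: powr_mono2)
    qed
    then show "f \<psi> \<le> (\<Sum>j\<in>{1..n}. norm (x j) powr q) powr (1 / q)"
      unfolding f_def using q by (intro powr_mono2) (auto intro: sum_nonneg)
  qed
  have "norm (x k) = (norm (\<phi> (x k)) powr q) powr (1 / q)"
    using q \<phi>(2) by (simp add: powr_powr)
  also have "\<dots> \<le> f \<phi>" unfolding f_def using q k
    by (intro powr_mono2) (auto intro!: member_le_sum[where f="\<lambda>j. norm (\<phi> (x j)) powr q"])
  also have "\<dots> \<le> weak_norm sc S q n x" unfolding weak_norm_def f_def[symmetric]
    by (rule cSUP_upper[OF \<phi>(1) bdd])
  finally show ?thesis .
qed

lemma index_bound:
  fixes sc :: "'k::real_normed_field \<Rightarrow> 'e::real_normed_vector \<Rightarrow> 'e"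
    and scF :: "'k \<Rightarrow> 'f::real_normed_vector \<Rightarrow> 'f"
  assumes norming: "\<forall>i<m. \<forall>y\<in>S i. \<exists>\<phi>\<in>dual_ball sc (S i). norm (\<phi> y) = norm y"
    and p: "p > 0" and s: "real m / p \<le> s"
  shows "mult_index sc scF m S p p \<le> ereal s"
  unfolding mult_index_def
proof (rule Inf_lower, rule imageI, safe)
  fix T assume "mult_bounded sc scF m S T"
  then obtain C0 where C0: "\<forall>x. (\<forall>j<m. x j \<in> S j) \<longrightarrow> norm (T (args m x)) \<le> C0 * (\<Prod>j<m. norm (x j))"
    unfolding mult_bounded_def by blast
  define C where "C = max C0 0"
  have C: "norm (T (args m x)) \<le> C * (\<Prod>j<m. norm (x j))" if "\<forall>j<m. x j \<in> S j" for x
  proof -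
    have "norm (T (args m x)) \<le> C0 * (\<Prod>j<m. norm (x j))" using C0 that by blast
    also have "\<dots> \<le> C * (\<Prod>j<m. norm (x j))" unfolding C_def
      by (intro mult_right_mono) (auto intro: prod_nonneg)
    finally show ?thesis .
  qed
  have C0': "C \<ge> 0" by (simp add: C_def)
  show "\<exists>C\<ge>0. \<forall>n\<ge>1. \<forall>x::nat \<Rightarrow> nat \<Rightarrow> 'e. (\<forall>i<m. \<forall>k\<in>{1..n}. x i k \<in> S i) \<longrightarrow>
        (\<Sum>k\<in>PiE {..<m} (\<lambda>_. {1..n}). norm (T (args m (\<lambda>i. x i (k i)))) powr p) powr (1 / p)
          \<le> C * real n powr s * (\<Prod>i<m. weak_norm sc (S i) p n (x i))"
  proof (intro exI[of _ C] conjI allI impI C0')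
    fix n :: nat and x :: "nat \<Rightarrow> nat \<Rightarrow> 'e"
    assume n: "1 \<le> n" and xS: "\<forall>i<m. \<forall>k\<in>{1..n}. x i k \<in> S i"
    define W where "W i = weak_norm sc (S i) p n (x i)" for i
    have Wge: "norm (x i k) \<le> W i" if "i < m" "k \<in> {1..n}" for i k
      unfolding W_def using that xS norming p by (intro weak_norm_ge) auto
    have W0: "0 \<le> W i" if "i < m" for i
      using Wge[OF that, of 1] n by (meson atLeastAtMost_iff le_refl norm_ge_zero order_trans)
    define Q where "Q = C * (\<Prod>i<m. W i)"
    have Q0: "Q \<ge> 0" unfolding Q_def using C0' W0 by (intro mult_nonneg_nonneg prod_nonneg) auto
    have trm: "norm (T (args m (\<lambda>i. x i (k i)))) powr p \<le> Q powr p"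
      if k: "k \<in> PiE {..<m} (\<lambda>_. {1..n})" for k
    proof -
      have kin: "k i \<in> {1..n}" if "i < m" for i using k that by (auto simp: PiE_iff)
      have "norm (T (args m (\<lambda>i. x i (k i)))) \<le> C * (\<Prod>j<m. norm (x j (k j)))"
        using C[of "\<lambda>i. x i (k i)"] xS kin by blast
      also have "\<dots> \<le> Q" unfolding Q_def using C0' Wge kin
        by (intro mult_left_mono prod_mono) auto
      finally show ?thesis using p by (intro powr_mono2) auto
    qed
    have card: "card (PiE {..<m} (\<lambda>_. {1..n::nat})) = n ^ m"
      by (simp add: card_PiE)
    have npos: "real n > 0" using n by simp
    have "(\<Sum>k\<in>PiE {..<m} (\<lambda>_. {1..n}). norm (T (args m (\<lambda>i. x i (k i)))) powr p)
          \<le> (\<Sum>k\<in>PiE {..<m} (\<lambda>_. {1..n}). Q powr p)" by (rule sum_mono[OF trm])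
    also have "\<dots> = real n powr real m * Q powr p" using card npos by (simp add: powr_realpow)
    finally have "(\<Sum>k\<in>PiE {..<m} (\<lambda>_. {1..n}). norm (T (args m (\<lambda>i. x i (k i)))) powr p) powr (1 / p)
         \<le> (real n powr real m * Q powr p) powr (1 / p)" using p by (intro powr_mono2) (auto intro: sum_nonneg)
    also have "\<dots> = real n powr (real m / p) * Q" using p Q0
      by (simp add: powr_mult powr_powr)
    also have "\<dots> \<le> real n powr s * Q" using s n Q0 by (intro mult_right_mono powr_mono) auto
    also have "\<dots> = C * real n powr s * (\<Prod>i<m. W i)" unfolding Q_def by simp
    finally show "(\<Sum>k\<in>PiE {..<m} (\<lambda>_. {1..n}). norm (T (args m (\<lambda>i. x i (k i)))) powr p) powr (1 / p)
          \<le> C * real n powr s * (\<Prod>i<m. weak_norm sc (S i) p n (x i))" unfolding W_def .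
  qed
qed

theorem mainTheorem2:
  fixes p :: real and m :: nat
  assumes "0 < p" and "1 \<le> m"
  shows
    "(\<forall>S :: nat \<Rightarrow> 'e::banach set.
        (\<forall>i<m. K_subspace (scaleR :: real \<Rightarrow> 'e \<Rightarrow> 'e) (S i)) \<longrightarrow>
          (p \<le> 2 \<longrightarrow> mult_index scaleR (scaleR :: real \<Rightarrow> 'f::banach \<Rightarrow> 'f) m S p p \<le> ereal (real m / p)) \<and>
          (2 \<le> p \<longrightarrow> mult_index scaleR (scaleR :: real \<Rightarrow> 'f \<Rightarrow> 'f) m S p p \<le> ereal (real m / 2)))
     \<and>
     (\<forall>(scE :: complex \<Rightarrow> 'e \<Rightarrow> 'e) (scF :: complex \<Rightarrow> 'f \<Rightarrow> 'f) S.
        K_scaling scE \<and> K_scaling scF \<and> (\<forall>i<m. K_subspace scE (S i)) \<longrightarrow>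
          (p \<le> 2 \<longrightarrow> mult_index scE scF m S p p \<le> ereal (real m / p)) \<and>
          (2 \<le> p \<longrightarrow> mult_index scE scF m S p p \<le> ereal (real m / 2)))"
proof -
  have le2: "real m / p \<le> real m / 2" if "2 \<le> p" using that assms
    by (intro divide_left_mono) auto
  show ?thesis
  proof (intro conjI allI impI)
    fix S :: "nat \<Rightarrow> 'e set" assume h: "\<forall>i<m. K_subspace (scaleR :: real \<Rightarrow> 'e \<Rightarrow> 'e) (S i)"
    have nm: "\<forall>i<m. \<forall>y\<in>S i. \<exists>\<phi>\<in>dual_ball (scaleR :: real \<Rightarrow> 'e \<Rightarrow> 'e) (S i). norm (\<phi> y) = norm y"
      using h norming_real by blast
    show "mult_index scaleR (scaleR :: real \<Rightarrow> 'f \<Rightarrow> 'f) m S p p \<le> ereal (real m / p)"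
      by (rule index_bound[OF nm assms(1)]) simp
    assume "2 \<le> p"
    show "mult_index scaleR (scaleR :: real \<Rightarrow> 'f \<Rightarrow> 'f) m S p p \<le> ereal (real m / 2)"
      by (rule index_bound[OF nm assms(1) le2[OF \<open>2 \<le> p\<close>]])
  next
    fix scE :: "complex \<Rightarrow> 'e \<Rightarrow> 'e" and scF :: "complex \<Rightarrow> 'f \<Rightarrow> 'f" and S
    assume h: "K_scaling scE \<and> K_scaling scF \<and> (\<forall>i<m. K_subspace scE (S i))"
    have nm: "\<forall>i<m. \<forall>y\<in>S i. \<exists>\<phi>\<in>dual_ball scE (S i). norm (\<phi> y) = norm y"
      using h norming_complex by blast
    show "mult_index scE scF m S p p \<le> ereal (real m / p)"
      by (rule index_bound[OF nm assms(1)]) simp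
    assume "2 \<le> p"
    show "mult_index scE scF m S p p \<le> ereal (real m / 2)"
      by (rule index_bound[OF nm assms(1) le2[OF \<open>2 \<le> p\<close>]])
  qed
qed

end
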